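(* Let $F=f+\Psi$ on $\mathbf{R}^n$, where $\Psi:\mathbf{R}^n\to\mathbf{R}\cup\{+\infty\}$ is proper, convex and closed, and $f$ is differentiable with $\|\nabla f(x)-\nabla f(y)\|_2\le L\|x-y\|_2$ for all $x,y\in\operatorname{dom}\Psi$, for some $L>0$. Let $F^\star=\min_xF(x)$ (assumed attained). Suppose $F$ satisfies the weak gradient-mapping dominance condition with parameter $\omega>0$: \[ \|G_L(x)\|_2\ge\sqrt{2\omega}\,\bigl(F(T_L(x))-F^\star\bigr)\qquad\forall x\in\operatorname{dom}\Psi. \] Then the proximal gradient method $x^{(k+1)}=T_L(x^{(k)})$, started from any $x^{(0)}\in\operatorname{dom}\Psi$, satisfies for all $k\ge0$ \[ F(x^{(k)})-F^\star\le\max\Bigl\{\frac{4L}{\omega k},\ \Bigl(\frac{\sqrt2}{2}\Bigr)^k\bigl(F(x^{(0)})-F^\star\bigr)\Bigr\}, \] where $\frac{4L}{\omega k}$ is interpreted as $+\infty$ for $k=0$.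
   Context: For a convex function $\phi$, $\operatorname{prox}_\phi(x)=\arg\min_y\{\phi(y)+\tfrac12\|y-x\|_2^2\}$. Define $T_L(x)=\operatorname{prox}_{\frac1L\Psi}\bigl(x-\frac1L\nabla f(x)\bigr)$ and the gradient mapping $G_L(x)=L\bigl(x-T_L(x)\bigr)$. The proximal gradient method with constant step size $1/L$ is $x^{(k+1)}=T_L(x^{(k)})$. *)

theory Defs
  imports "HOL-Analysis.Analysis"
begin

text \<open>An extended-real-valued function Psi : R^n -> R \<union> {+inf} is represented by its
  effective domain D and its (real) values on D; Psi = +inf outside D.\<close>

definition proper_closed_convex :: "('a::real_normed_vector) set \<Rightarrow> ('a \<Rightarrow> real) \<Rightarrow> bool" where
  "proper_closed_convex D \<Psi> \<longleftrightarrow>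
     D \<noteq> {} \<and> convex D \<and> convex_on D \<Psi> \<and> closed {(x, t). x \<in> D \<and> \<Psi> x \<le> t}"

definition prox :: "real \<Rightarrow> ('a::real_normed_vector) set \<Rightarrow> ('a \<Rightarrow> real) \<Rightarrow> 'a \<Rightarrow> 'a" where
  "prox L D \<Psi> v = (THE y. y \<in> D \<and>
      (\<forall>z\<in>D. \<Psi> y / L + (norm (y - v))\<^sup>2 / 2 \<le> \<Psi> z / L + (norm (z - v))\<^sup>2 / 2))"

definition T_map :: "real \<Rightarrow> ('a::real_normed_vector) set \<Rightarrow> ('a \<Rightarrow> real) \<Rightarrow> ('a \<Rightarrow> 'a) \<Rightarrow> 'a \<Rightarrow> 'a" where
  "T_map L D \<Psi> gradf x = prox L D \<Psi> (x - (1 / L) *\<^sub>R gradf x)"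

definition G_map :: "real \<Rightarrow> ('a::real_normed_vector) set \<Rightarrow> ('a \<Rightarrow> real) \<Rightarrow> ('a \<Rightarrow> 'a) \<Rightarrow> 'a \<Rightarrow> 'a" where
  "G_map L D \<Psi> gradf x = L *\<^sub>R (x - T_map L D \<Psi> gradf x)"

end

theory Submission
  imports Defs
begin

lemma epi_lim:
  fixes \<Psi> :: "'a::real_normed_vector \<Rightarrow> real"
  assumes P: "proper_closed_convex D \<Psi>"
    and ev: "eventually (\<lambda>n. y n \<in> D \<and> \<Psi> (y n) \<le> s n) sequentially"
    and y: "y \<longlonglongrightarrow> y0" and s: "s \<longlonglongrightarrow> s0"
  shows "y0 \<in> D \<and> \<Psi> y0 \<le> s0"
proof -
  have cl: "closed {(x, t). x \<in> D \<and> \<Psi> x \<le> t}" using P by (simp add: proper_closed_convex_def)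
  have L: "(\<lambda>n. (y n, s n)) \<longlonglongrightarrow> (y0, s0)" using y s by (rule tendsto_Pair)
  have E: "eventually (\<lambda>n. (y n, s n) \<in> {(x, t). x \<in> D \<and> \<Psi> x \<le> t}) sequentially"
    using ev by simp
  have "(y0, s0) \<in> {(x, t). x \<in> D \<and> \<Psi> x \<le> t}"
    by (rule Lim_in_closed_set[OF cl E trivial_limit_sequentially L])
  then show ?thesis by simp
qed

lemma lower_bound_ball:
  fixes \<Psi> :: "'a::euclidean_space \<Rightarrow> real"
  assumes P: "proper_closed_convex D \<Psi>"
  shows "\<exists>B. \<forall>z\<in>D. norm (z - a) \<le> 1 \<longrightarrow> B \<le> \<Psi> z"
proof (rule ccontr)
  assume "\<not> ?thesis"
  then have "\<forall>n::nat. \<exists>z. z \<in> D \<and> norm (z - a) \<le> 1 \<and> \<Psi> z < - real n"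
    by (meson not_le)
  then obtain z where z: "\<And>n. z n \<in> D" "\<And>n. norm (z n - a) \<le> 1" "\<And>n. \<Psi> (z n) < - real n"
    by metis
  have "bounded (range z)"
    unfolding bounded_iff
    by (metis z(2) norm_triangle_sub order.trans add_le_cancel_right norm_minus_commute rangeE
        order_refl norm_triangle_ineq4 diff_add_cancel norm_triangle_le add.commute)
  then obtain l r where r: "strict_mono r" and lim: "(z \<circ> r) \<longlonglongrightarrow> l"
    using bounded_imp_convergent_subsequence by blast
  define M where "M = - \<Psi> l + 1"
  have "eventually (\<lambda>n. (z \<circ> r) n \<in> D \<and> \<Psi> ((z \<circ> r) n) \<le> -M) sequentially"
  proof -
    have "eventually (\<lambda>n. n \<ge> nat \<lceil>M\<rceil>) sequentially" by (rule eventually_ge_at_top)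
    then show ?thesis
    proof (rule eventually_mono)
      fix n assume n: "nat \<lceil>M\<rceil> \<le> n"
      have "n \<le> r n" using r by (simp add: seq_suble)
      then have "M \<le> real (r n)" using n by linarith
      then show "(z \<circ> r) n \<in> D \<and> \<Psi> ((z \<circ> r) n) \<le> -M" using z(1) z(3)[of "r n"] by simp
    qed
  qed
  from epi_lim[OF P this lim tendsto_const] have "\<Psi> l \<le> -M" by simp
  then show False by (simp add: M_def)
qed

lemma minorant:
  fixes \<Psi> :: "'a::euclidean_space \<Rightarrow> real"
  assumes P: "proper_closed_convex D \<Psi>" and a: "a \<in> D"
  shows "\<exists>B c. c \<ge> 0 \<and> (\<forall>y\<in>D. B - c * norm (y - a) \<le> \<Psi> y)"
proof -
  obtain B where B: "\<And>z. z \<in> D \<Longrightarrow> norm (z - a) \<le> 1 \<Longrightarrow> B \<le> \<Psi> z"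
    using lower_bound_ball[OF P, of a] by blast
  have cv: "convex_on D \<Psi>" and cD: "convex D" using P by (auto simp: proper_closed_convex_def)
  have Ba: "B \<le> \<Psi> a" using B[OF a] by simp
  define c where "c = \<Psi> a - B"
  have "B - c * norm (y - a) \<le> \<Psi> y" if y: "y \<in> D" for y
  proof (cases "norm (y - a) \<le> 1")
    case True
    have "0 \<le> (\<Psi> a - B) * norm (y - a)" using Ba by simp
    then show ?thesis using B[OF y] True unfolding c_def by linarith
  next
    case False
    define d where "d = norm (y - a)"
    have d1: "d > 1" using False d_def by simp
    define t where "t = 1 / d"
    have t0: "0 \<le> t" "t \<le> 1" using d1 by (auto simp: t_def)
    define z where "z = (1 - t) *\<^sub>R a + t *\<^sub>R y"
    have zD: "z \<in> D" using convexD_alt[OF cD a y t0] by (simp add: z_def)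
    have "z - a = t *\<^sub>R (y - a)" by (simp add: z_def algebra_simps)
    have "y \<noteq> a" using d1 d_def by auto
    then have "norm (z - a) = 1" using d1 \<open>z - a = t *\<^sub>R (y - a)\<close> by (simp add: t_def d_def)
    then have "B \<le> \<Psi> z" using B zD by simp
    also have "\<Psi> z \<le> (1 - t) * \<Psi> a + t * \<Psi> y"
      using convex_onD[OF cv t0 a y] by (simp add: z_def)
    finally have "d * B \<le> d * ((1 - t) * \<Psi> a + t * \<Psi> y)" using d1 by simp
    also have "\<dots> = (d - 1) * \<Psi> a + \<Psi> y" using d1 by (simp add: t_def field_simps)
    finally have f1: "d * B \<le> (d - 1) * \<Psi> a + \<Psi> y" .
    have "B - c * norm (y - a) = B - (\<Psi> a - B) * d" by (simp add: c_def d_def)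
    also have "\<dots> = B + d * B - d * \<Psi> a" by (simp add: algebra_simps)
    also have "\<dots> \<le> B + ((d - 1) * \<Psi> a + \<Psi> y) - d * \<Psi> a" using f1 by simp
    also have "\<dots> = B - \<Psi> a + \<Psi> y" by (simp add: algebra_simps)
    also have "\<dots> \<le> \<Psi> y" using Ba by simp
    finally show ?thesis .
  qed
  moreover have "c \<ge> 0" using Ba by (simp add: c_def)
  ultimately show ?thesis by blast
qed

lemma norm_sq_convex_identity:
  fixes a b v :: "'a::real_inner"
  shows "(norm ((1 - t) *\<^sub>R a + t *\<^sub>R b - v))\<^sup>2
       = (1 - t) * (norm (a - v))\<^sup>2 + t * (norm (b - v))\<^sup>2 - t * (1 - t) * (norm (a - b))\<^sup>2"
proof -
  have e1: "(1 - t) *\<^sub>R a + t *\<^sub>R b - v = (1 - t) *\<^sub>R (a - v) + t *\<^sub>R (b - v)"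
    by (simp add: algebra_simps)
  have e2: "a - b = (a - v) - (b - v)" by simp
  define p where "p = a - v"
  define q where "q = b - v"
  have "(norm ((1 - t) *\<^sub>R p + t *\<^sub>R q))\<^sup>2
       = (1 - t) * (norm p)\<^sup>2 + t * (norm q)\<^sup>2 - t * (1 - t) * (norm (p - q))\<^sup>2"
    unfolding power2_norm_eq_inner
    by (simp only: inner_add_left inner_add_right inner_diff_left inner_diff_right
        inner_scaleR_left inner_scaleR_right inner_commute[of q p]) (simp add: algebra_simps)
  then show ?thesis unfolding e1 e2 p_def q_def .
qed

lemma strong_convex:
  fixes \<Psi> :: "'a::real_inner \<Rightarrow> real"
  assumes cv: "convex_on D \<Psi>" and L: "L > 0" and a: "a \<in> D" and b: "b \<in> D"
    and t: "0 \<le> t" "t \<le> 1"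
  shows "\<Psi> ((1 - t) *\<^sub>R a + t *\<^sub>R b) / L + (norm ((1 - t) *\<^sub>R a + t *\<^sub>R b - v))\<^sup>2 / 2
    \<le> (1 - t) * (\<Psi> a / L + (norm (a - v))\<^sup>2 / 2) + t * (\<Psi> b / L + (norm (b - v))\<^sup>2 / 2)
       - t * (1 - t) / 2 * (norm (a - b))\<^sup>2"
proof -
  define w where "w = (1 - t) *\<^sub>R a + t *\<^sub>R b"
  have "\<Psi> w \<le> (1 - t) * \<Psi> a + t * \<Psi> b"
    using convex_onD[OF cv t a b] by (simp add: w_def)
  then have "\<Psi> w / L \<le> ((1 - t) * \<Psi> a + t * \<Psi> b) / L"
    using L by (simp add: divide_right_mono)
  also have "\<dots> = (1 - t) * (\<Psi> a / L) + t * (\<Psi> b / L)" by (simp add: add_divide_distrib)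
  finally have 1: "\<Psi> w / L \<le> (1 - t) * (\<Psi> a / L) + t * (\<Psi> b / L)" .
  have 2: "(norm (w - v))\<^sup>2
       = (1 - t) * (norm (a - v))\<^sup>2 + t * (norm (b - v))\<^sup>2 - t * (1 - t) * (norm (a - b))\<^sup>2"
    unfolding w_def by (rule norm_sq_convex_identity)
  have 3: "t * (1 - t) / 2 * (norm (a - b))\<^sup>2 = (t * (1 - t) * (norm (a - b))\<^sup>2) / 2" by simp
  show ?thesis unfolding w_def[symmetric] 2 3 using 1 by (simp add: diff_divide_distrib add_divide_distrib algebra_simps)
qed

lemma prox_exists:
  fixes \<Psi> :: "'a::euclidean_space \<Rightarrow> real"
  assumes P: "proper_closed_convex D \<Psi>" and L: "L > 0"
  shows "\<exists>y\<in>D. \<forall>z\<in>D. \<Psi> y / L + (norm (y - v))\<^sup>2 / 2 \<le> \<Psi> z / L + (norm (z - v))\<^sup>2 / 2"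
proof -
  define h where "h z = \<Psi> z / L + (norm (z - v))\<^sup>2 / 2" for z
  obtain a where a: "a \<in> D" using P by (auto simp: proper_closed_convex_def)
  obtain B c where c: "c \<ge> 0" and Bc: "\<And>y. y \<in> D \<Longrightarrow> B - c * norm (y - a) \<le> \<Psi> y"
    using minorant[OF P a] by blast
  define K where "K = c / L"
  have K0: "K \<ge> 0" using c L by (simp add: K_def)
  define lb where "lb = B / L - K * norm (v - a) - K\<^sup>2"
  have hlow: "lb + (norm (y - v))\<^sup>2 / 4 \<le> h y" if y: "y \<in> D" for y
  proof -
    define r where "r = norm (y - v)"
    have "norm (y - a) \<le> r + norm (v - a)" unfolding r_def
      by (metis norm_triangle_ineq diff_add_cancel add_diff_eq)
    then have "c * norm (y - a) \<le> c * (r + norm (v - a))" using c by (simp add: mult_left_mono)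
    then have "B - c * (r + norm (v - a)) \<le> \<Psi> y" using Bc[OF y] by linarith
    then have "(B - c * (r + norm (v - a))) / L \<le> \<Psi> y / L" using L by (simp add: divide_right_mono)
    also have "(B - c * (r + norm (v - a))) / L = B / L - K * r - K * norm (v - a)"
      using L by (simp add: K_def field_simps)
    finally have 1: "B / L - K * r - K * norm (v - a) \<le> \<Psi> y / L" .
    have 2: "r\<^sup>2 / 4 - K\<^sup>2 \<le> r\<^sup>2 / 2 - K * r"
    proof -
      have e: "(r/2 - K)\<^sup>2 = r\<^sup>2/4 - K*r + K\<^sup>2" by (simp add: power2_eq_square field_simps)
      have "0 \<le> (r/2 - K)\<^sup>2" by simp
      then show ?thesis unfolding e by simp
    qed
    show ?thesis using 1 2 unfolding h_def lb_def r_def[symmetric] by linarith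
  qed
  have bdd: "bdd_below (h ` D)"
  proof (rule bdd_belowI2[of _ lb])
    fix x assume "x \<in> D"
    moreover have "0 \<le> (norm (x - v))\<^sup>2 / 4" by simp
    ultimately show "lb \<le> h x" using hlow[of x] by linarith
  qed
  define m where "m = Inf (h ` D)"
  have mle: "m \<le> h z" if "z \<in> D" for z
    unfolding m_def using bdd that by (simp add: cInf_lower)
  have "\<exists>y. y \<in> D \<and> h y < m + inverse (real (Suc n))" for n
  proof (rule ccontr)
    assume "\<not> ?thesis"
    then have "\<And>y. y \<in> D \<Longrightarrow> m + inverse (real (Suc n)) \<le> h y" by (meson not_le)
    then have "m + inverse (real (Suc n)) \<le> m" unfolding m_def
      using a by (intro cInf_greatest) auto
    then show False by simp
  qed
  then obtain y where yD: "\<And>n. y n \<in> D" and yh: "\<And>n. h (y n) < m + inverse (real (Suc n))"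
    by metis
  define Q where "Q = 4 * (m + 1 - lb)"
  have rb: "norm (y n - v) \<le> 1 + Q" for n
  proof -
    have "inverse (real (Suc n)) \<le> 1" by (simp add: inverse_le_1_iff)
    then have "lb + (norm (y n - v))\<^sup>2 / 4 \<le> m + 1" using hlow[OF yD[of n]] yh[of n] by linarith
    then have "(norm (y n - v))\<^sup>2 / 4 \<le> m + 1 - lb" by linarith
    then have q: "(norm (y n - v))\<^sup>2 \<le> Q" unfolding Q_def by simp
    show ?thesis
    proof (cases "norm (y n - v) \<le> 1")
      case True
      have "0 \<le> (norm (y n - v))\<^sup>2" by simp
      then show ?thesis using q True by linarith
    next
      case False
      then have "norm (y n - v) \<le> (norm (y n - v))\<^sup>2" using mult_left_mono[of 1 "norm (y n - v)" "norm (y n - v)"] by (simp add: power2_eq_square)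
      then show ?thesis using q by linarith
    qed
  qed
  have "bounded (range y)"
    unfolding bounded_iff
  proof (intro exI allI ballI)
    fix x assume "x \<in> range y"
    then obtain n where "x = y n" by auto
    then show "norm x \<le> norm v + (1 + Q)"
      using rb[of n] norm_triangle_ineq[of "y n - v" v] by simp
  qed
  then obtain l r where r: "strict_mono r" and lim: "(y \<circ> r) \<longlonglongrightarrow> l"
    using bounded_imp_convergent_subsequence by blast
  have hlim: "(\<lambda>n. h (y (r n))) \<longlonglongrightarrow> m"
  proof (rule tendsto_sandwich[of "\<lambda>n. m" _ _ "\<lambda>n. m + inverse (real (Suc n))"])
    show "\<forall>\<^sub>F n in sequentially. m \<le> h (y (r n))" using mle yD by simp
    show "\<forall>\<^sub>F n in sequentially. h (y (r n)) \<le> m + inverse (real (Suc n))"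
    proof (intro always_eventually allI)
      fix n
      have "n \<le> r n" using r by (simp add: seq_suble)
      then have "inverse (real (Suc (r n))) \<le> inverse (real (Suc n))"
        by (simp add: le_imp_inverse_le)
      then show "h (y (r n)) \<le> m + inverse (real (Suc n))" using yh[of "r n"] by linarith
    qed
    show "(\<lambda>n. m) \<longlonglongrightarrow> m" by simp
    show "(\<lambda>n. m + inverse (real (Suc n))) \<longlonglongrightarrow> m"
      using tendsto_add[OF tendsto_const LIMSEQ_inverse_real_of_nat, of m] by simp
  qed
  have lim': "(\<lambda>n. y (r n)) \<longlonglongrightarrow> l" using lim by (simp add: comp_def)
  have slim: "(\<lambda>n. L * (h (y (r n)) - (norm (y (r n) - v))\<^sup>2 / 2)) \<longlonglongrightarrow> L * (m - (norm (l - v))\<^sup>2 / 2)"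
    by (intro tendsto_intros hlim lim') simp
  have ev: "eventually (\<lambda>n. y (r n) \<in> D \<and> \<Psi> (y (r n)) \<le> L * (h (y (r n)) - (norm (y (r n) - v))\<^sup>2 / 2)) sequentially"
    using yD L by (simp add: h_def)
  from epi_lim[OF P ev lim' slim] have lD: "l \<in> D" and "\<Psi> l \<le> L * (m - (norm (l - v))\<^sup>2 / 2)" by auto
  then have "h l \<le> m" using L unfolding h_def by (simp add: field_simps)
  then have "\<forall>z\<in>D. h l \<le> h z" using mle by force
  then show ?thesis using lD unfolding h_def by blast
qed

lemma eps_lemma:
  fixes A Bv d :: real
  assumes d: "d \<ge> 0" and H: "\<And>t. 0 < t \<Longrightarrow> t \<le> 1 \<Longrightarrow> A \<le> Bv - (1 - t) * d / 2"
  shows "A + d / 2 \<le> Bv"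
proof (rule field_le_epsilon)
  fix e :: real assume e: "e > 0"
  define t where "t = min 1 (e / (d + 1))"
  have t: "0 < t" "t \<le> 1" using e d by (auto simp: t_def)
  have "t * d \<le> e / (d + 1) * d" using d by (intro mult_right_mono) (auto simp: t_def)
  also have "\<dots> \<le> e" using e d by (simp add: field_simps)
  finally have td: "t * d \<le> e" .
  have "A \<le> Bv - (1 - t) * d / 2" using H[OF t] .
  moreover have "(1 - t) * d / 2 = d / 2 - (t * d) / 2" by (simp add: algebra_simps diff_divide_distrib)
  ultimately show "A + d / 2 \<le> Bv + e" using td e by linarith
qed

lemma quad_growth:
  fixes \<Psi> :: "'a::real_inner \<Rightarrow> real"
  assumes cv: "convex_on D \<Psi>" and L: "L > 0" and y: "y \<in> D"
    and ymin: "\<forall>z\<in>D. \<Psi> y / L + (norm (y - v))\<^sup>2 / 2 \<le> \<Psi> z / L + (norm (z - v))\<^sup>2 / 2"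
    and z: "z \<in> D"
  shows "\<Psi> y / L + (norm (y - v))\<^sup>2 / 2 + (norm (z - y))\<^sup>2 / 2 \<le> \<Psi> z / L + (norm (z - v))\<^sup>2 / 2"
proof -
  define h where "h x = \<Psi> x / L + (norm (x - v))\<^sup>2 / 2" for x
  have cD: "convex D" using cv by (simp add: convex_on_def)
  have "h y \<le> h z - (1 - t) * (norm (z - y))\<^sup>2 / 2" if t: "0 < t" "t \<le> 1" for t
  proof -
    have wD: "(1 - t) *\<^sub>R y + t *\<^sub>R z \<in> D" using convexD_alt[OF cD y z] t by simp
    have "h y \<le> h ((1 - t) *\<^sub>R y + t *\<^sub>R z)" using ymin wD by (simp add: h_def)
    also have "\<dots> \<le> (1 - t) * h y + t * h z - t * (1 - t) / 2 * (norm (y - z))\<^sup>2"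
      unfolding h_def using strong_convex[OF cv L y z, of t v] t by simp
    finally have "t * h y \<le> t * (h z - (1 - t) * (norm (y - z))\<^sup>2 / 2)"
      by (simp add: algebra_simps)
    then have "h y \<le> h z - (1 - t) * (norm (y - z))\<^sup>2 / 2" using t by simp
    then show ?thesis by (simp add: norm_minus_commute)
  qed
  from eps_lemma[OF zero_le_power2 this] show ?thesis unfolding h_def .
qed

lemma prox_char:
  fixes \<Psi> :: "'a::euclidean_space \<Rightarrow> real"
  assumes P: "proper_closed_convex D \<Psi>" and L: "L > 0"
  shows "prox L D \<Psi> v \<in> D \<and>
    (\<forall>z\<in>D. \<Psi> (prox L D \<Psi> v) / L + (norm (prox L D \<Psi> v - v))\<^sup>2 / 2 \<le> \<Psi> z / L + (norm (z - v))\<^sup>2 / 2)"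
proof -
  have cv: "convex_on D \<Psi>" using P by (simp add: proper_closed_convex_def)
  let ?Q = "\<lambda>y. y \<in> D \<and> (\<forall>z\<in>D. \<Psi> y / L + (norm (y - v))\<^sup>2 / 2 \<le> \<Psi> z / L + (norm (z - v))\<^sup>2 / 2)"
  obtain y where y: "?Q y" using prox_exists[OF P L, of v] by blast
  have "\<exists>!y. ?Q y"
  proof (rule ex1I[of _ y])
    show "?Q y" by (rule y)
    fix y' assume y': "?Q y'"
    have "\<Psi> y / L + (norm (y - v))\<^sup>2 / 2 + (norm (y' - y))\<^sup>2 / 2 \<le> \<Psi> y' / L + (norm (y' - v))\<^sup>2 / 2"
      using quad_growth[OF cv L _ _ ] y y' by blast
    moreover have "\<Psi> y' / L + (norm (y' - v))\<^sup>2 / 2 \<le> \<Psi> y / L + (norm (y - v))\<^sup>2 / 2"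
      using y y' by blast
    ultimately have "(norm (y' - y))\<^sup>2 \<le> 0" by linarith
    then show "y' = y" by simp
  qed
  from theI'[OF this] show ?thesis unfolding prox_def .
qed

lemma descent:
  fixes f :: "'a::euclidean_space \<Rightarrow> real"
  assumes grad: "\<And>x. (f has_derivative (\<lambda>h. gradf x \<bullet> h)) (at x)"
    and cD: "convex D"
    and Lip: "\<And>x y. x \<in> D \<Longrightarrow> y \<in> D \<Longrightarrow> norm (gradf x - gradf y) \<le> L * norm (x - y)"
    and x: "x \<in> D" and y: "y \<in> D"
  shows "f y \<le> f x + gradf x \<bullet> (y - x) + L / 2 * (norm (y - x))\<^sup>2"
proof -
  define u where "u = y - x"
  define c where "c = gradf x \<bullet> u"
  define n2 where "n2 = (norm u)\<^sup>2"
  define \<phi> where "\<phi> t = f (x + t *\<^sub>R u) - t * c - L / 2 * t\<^sup>2 * n2" for t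
  have D1: "((\<lambda>t. f (x + t *\<^sub>R u)) has_real_derivative (gradf (x + t *\<^sub>R u) \<bullet> u)) (at t)" for t
  proof -
    have lin: "((\<lambda>t. x + t *\<^sub>R u) has_derivative (\<lambda>s. s *\<^sub>R u)) (at t)"
      by (auto intro!: derivative_eq_intros)
    have "((\<lambda>t. f (x + t *\<^sub>R u)) has_derivative (\<lambda>s. gradf (x + t *\<^sub>R u) \<bullet> (s *\<^sub>R u))) (at t)"
      using has_derivative_compose[OF lin grad] .
    moreover have "(\<lambda>s. gradf (x + t *\<^sub>R u) \<bullet> (s *\<^sub>R u)) = (*) (gradf (x + t *\<^sub>R u) \<bullet> u)"
      by (auto simp: fun_eq_iff)
    ultimately show ?thesis unfolding has_field_derivative_def by simp
  qed
  have Dphi: "(\<phi> has_real_derivative (gradf (x + t *\<^sub>R u) \<bullet> u - c - L * t * n2)) (at t)" for t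
    unfolding \<phi>_def
    by (auto intro!: derivative_eq_intros D1 simp: power2_eq_square algebra_simps)
  have neg: "gradf (x + t *\<^sub>R u) \<bullet> u - c - L * t * n2 \<le> 0" if t: "0 \<le> t" "t \<le> 1" for t
  proof -
    have pD: "x + t *\<^sub>R u \<in> D" using convexD_alt[OF cD x y t] by (simp add: u_def algebra_simps)
    have "gradf (x + t *\<^sub>R u) \<bullet> u - c = (gradf (x + t *\<^sub>R u) - gradf x) \<bullet> u"
      by (simp add: c_def inner_diff_left)
    also have "\<dots> \<le> norm (gradf (x + t *\<^sub>R u) - gradf x) * norm u" by (rule norm_cauchy_schwarz)
    also have "\<dots> \<le> L * norm (x + t *\<^sub>R u - x) * norm u"
      using Lip[OF pD x] by (simp add: mult_right_mono)
    also have "\<dots> = L * t * n2" using t by (simp add: n2_def power2_eq_square)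
    finally show ?thesis by simp
  qed
  have "\<phi> 1 \<le> \<phi> 0"
    using DERIV_nonpos_imp_nonincreasing[of 0 1 \<phi>] Dphi neg by fastforce
  then show ?thesis by (simp add: \<phi>_def u_def c_def n2_def)
qed

lemma suff_decrease:
  fixes f \<Psi> :: "'a::euclidean_space \<Rightarrow> real"
  assumes P: "proper_closed_convex D \<Psi>"
    and grad: "\<And>x. (f has_derivative (\<lambda>h. gradf x \<bullet> h)) (at x)"
    and L: "L > 0"
    and Lip: "\<And>x y. x \<in> D \<Longrightarrow> y \<in> D \<Longrightarrow> norm (gradf x - gradf y) \<le> L * norm (x - y)"
    and x: "x \<in> D"
  shows "T_map L D \<Psi> gradf x \<in> D \<and>
    f (T_map L D \<Psi> gradf x) + \<Psi> (T_map L D \<Psi> gradf x)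
      \<le> f x + \<Psi> x - L / 2 * (norm (x - T_map L D \<Psi> gradf x))\<^sup>2"
proof -
  define g where "g = gradf x"
  define v where "v = x - (1 / L) *\<^sub>R g"
  define y where "y = T_map L D \<Psi> gradf x"
  have yv: "y = prox L D \<Psi> v" by (simp add: y_def T_map_def v_def g_def)
  have cv: "convex_on D \<Psi>" and cD: "convex D" using P by (auto simp: proper_closed_convex_def)
  from prox_char[OF P L, of v] have yD: "y \<in> D"
    and ymin: "\<forall>z\<in>D. \<Psi> y / L + (norm (y - v))\<^sup>2 / 2 \<le> \<Psi> z / L + (norm (z - v))\<^sup>2 / 2"
    unfolding yv by auto
  have qg: "\<Psi> y / L + (norm (y - v))\<^sup>2 / 2 + (norm (x - y))\<^sup>2 / 2 \<le> \<Psi> x / L + (norm (x - v))\<^sup>2 / 2"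
    by (rule quad_growth[OF cv L yD ymin x])
  have e1: "(norm (y - v))\<^sup>2 = (norm (y - x))\<^sup>2 + 2 / L * (g \<bullet> (y - x)) + (norm g)\<^sup>2 / L\<^sup>2"
  proof -
    have "y - v = (y - x) + (1 / L) *\<^sub>R g" by (simp add: v_def)
    then have "(norm (y - v))\<^sup>2 = (norm ((y - x) + (1 / L) *\<^sub>R g))\<^sup>2" by (simp only:)
    also have "\<dots> = (y - x) \<bullet> (y - x) + 2 / L * (g \<bullet> (y - x)) + (g \<bullet> g) / L\<^sup>2"
      unfolding power2_norm_eq_inner
      by (simp only: inner_add_left inner_add_right inner_scaleR_left inner_scaleR_right
          inner_commute[of "y - x" g]) (simp add: power2_eq_square algebra_simps)
    finally have "(norm (y - v))\<^sup>2 = (y - x) \<bullet> (y - x) + 2 / L * (g \<bullet> (y - x)) + (g \<bullet> g) / L\<^sup>2" .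
    then show ?thesis by (simp add: power2_norm_eq_inner)
  qed
  have e2: "(norm (x - v))\<^sup>2 = (norm g)\<^sup>2 / L\<^sup>2"
    using L by (simp add: v_def power_divide)
  have nxy: "norm (x - y) = norm (y - x)" by (rule norm_minus_commute)
  from qg have H: "\<Psi> y / L + ((norm (y - x))\<^sup>2 + 2 / L * (g \<bullet> (y - x)) + (norm g)\<^sup>2 / L\<^sup>2) / 2
      + (norm (y - x))\<^sup>2 / 2 \<le> \<Psi> x / L + (norm g)\<^sup>2 / L\<^sup>2 / 2"
    unfolding e1 e2 nxy .
  have "((norm (y - x))\<^sup>2 + 2 / L * (g \<bullet> (y - x)) + (norm g)\<^sup>2 / L\<^sup>2) / 2
     = (norm (y - x))\<^sup>2 / 2 + (g \<bullet> (y - x)) / L + (norm g)\<^sup>2 / L\<^sup>2 / 2"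
    by (simp add: add_divide_distrib)
  with H have H2: "\<Psi> y / L + (g \<bullet> (y - x)) / L + (norm (y - x))\<^sup>2 \<le> \<Psi> x / L" by linarith
  have "L * (\<Psi> y / L + (g \<bullet> (y - x)) / L + (norm (y - x))\<^sup>2) \<le> L * (\<Psi> x / L)"
    using mult_left_mono[OF H2, of L] L by linarith
  moreover have "L * (\<Psi> y / L + (g \<bullet> (y - x)) / L + (norm (y - x))\<^sup>2)
     = \<Psi> y + g \<bullet> (y - x) + L * (norm (y - x))\<^sup>2"
    using L by (simp add: distrib_left)
  moreover have "L * (\<Psi> x / L) = \<Psi> x" using L by simp
  ultimately have A: "\<Psi> y + g \<bullet> (y - x) + L * (norm (y - x))\<^sup>2 \<le> \<Psi> x" by linarith
  have B: "f y \<le> f x + g \<bullet> (y - x) + L / 2 * (norm (y - x))\<^sup>2"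
    unfolding g_def by (rule descent[OF grad cD Lip x yD])
  from A B have "f y + \<Psi> y \<le> f x + \<Psi> x - L / 2 * (norm (y - x))\<^sup>2" by linarith
  then show ?thesis using yD unfolding y_def[symmetric] nxy by simp
qed

lemma rate_step:
  fixes d d' c :: real and a b :: nat
  assumes c: "c > 0" and d': "d' \<ge> 0" and dec: "2 * c * d'\<^sup>2 \<le> d - d'"
    and ih1: "d \<le> (1/2)^b * d0" and ih2: "real a * c * d \<le> 1"
  shows "\<exists>a' b'. a' + b' = Suc (a + b) \<and> d' \<le> (1/2)^b' * d0 \<and> real a' * c * d' \<le> 1"
proof (cases "d \<le> 2 * d'")
  case True
  have "0 \<le> 2 * c * d'\<^sup>2" using c by simp
  then have dd: "d' \<le> d" using dec by linarith
  have d0: "d \<ge> 0" using dd d' by linarith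
  have "c * d' * d \<le> c * d' * (2 * d')" using True c d' by (simp add: mult_left_mono)
  also have "\<dots> = 2 * c * d'\<^sup>2" by (simp add: power2_eq_square)
  finally have "d' * (1 + c * d) \<le> d" using dec by (simp add: algebra_simps)
  then have "(real a + 1) * c * (d' * (1 + c * d)) \<le> (real a + 1) * c * d"
    using c by (simp add: mult_left_mono)
  also have "\<dots> \<le> 1 + c * d" using ih2 by (simp add: algebra_simps)
  finally have "((real a + 1) * c * d') * (1 + c * d) \<le> 1 * (1 + c * d)" by (simp add: algebra_simps)
  moreover have "1 + c * d > 0"
  proof -
    have "0 \<le> c * d" using c d0 by simp
    then show ?thesis by linarith
  qed
  ultimately have "(real a + 1) * c * d' \<le> 1" by (meson mult_le_cancel_right_pos)
  then have "real (Suc a) * c * d' \<le> 1" by (simp add: add.commute)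
  moreover have "d' \<le> (1/2)^b * d0" using dd ih1 by linarith
  ultimately show ?thesis by (intro exI[of _ "Suc a"] exI[of _ b]) simp
next
  case False
  have dd: "d' \<le> d" using False d' by linarith
  have "d' \<le> (1/2)^(Suc b) * d0" using False ih1 by simp
  moreover have "real a * c * d' \<le> real a * c * d" using dd c by (simp add: mult_left_mono)
  ultimately show ?thesis using ih2 by (intro exI[of _ a] exI[of _ "Suc b"]) simp
qed

theorem theorem4:
  fixes f \<Psi> :: "real ^ 'n \<Rightarrow> real"
    and gradf :: "real ^ 'n \<Rightarrow> real ^ 'n"
    and D :: "(real ^ 'n) set"
    and L \<omega> Fstar :: real
    and x0 :: "real ^ 'n"
  assumes Psi: "proper_closed_convex D \<Psi>"
    and grad: "\<And>x. (f has_derivative (\<lambda>h. gradf x \<bullet> h)) (at x)"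
    and Lpos: "L > 0"
    and Lip: "\<And>x y. x \<in> D \<Longrightarrow> y \<in> D \<Longrightarrow> norm (gradf x - gradf y) \<le> L * norm (x - y)"
    and attained: "\<exists>xs\<in>D. f xs + \<Psi> xs = Fstar \<and> (\<forall>x\<in>D. Fstar \<le> f x + \<Psi> x)"
    and omega: "\<omega> > 0"
    and dominance: "\<And>x. x \<in> D \<Longrightarrow>
        norm (G_map L D \<Psi> gradf x)
          \<ge> sqrt (2 * \<omega>) * (f (T_map L D \<Psi> gradf x) + \<Psi> (T_map L D \<Psi> gradf x) - Fstar)"
    and x0: "x0 \<in> D"
  shows "\<forall>k::nat. k > 0 \<longrightarrow>
     f ((T_map L D \<Psi> gradf ^^ k) x0) + \<Psi> ((T_map L D \<Psi> gradf ^^ k) x0) - Fstar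
       \<le> max (4 * L / (\<omega> * real k)) ((sqrt 2 / 2) ^ k * (f x0 + \<Psi> x0 - Fstar))"
proof -
  define T where "T = T_map L D \<Psi> gradf"
  define xs where "xs k = (T ^^ k) x0" for k
  define \<delta> where "\<delta> k = f (xs k) + \<Psi> (xs k) - Fstar" for k
  define c where "c = \<omega> / (2 * L)"
  have c0: "c > 0" using omega Lpos by (simp add: c_def)
  have xsS: "xs (Suc k) = T (xs k)" for k by (simp add: xs_def)
  have xsD: "xs k \<in> D" for k
  proof (induction k)
    case 0 then show ?case using x0 by (simp add: xs_def)
  next
    case (Suc k) then show ?case
      using suff_decrease[OF Psi grad Lpos Lip Suc] by (simp add: xsS T_def)
  qed
  have d0: "\<delta> k \<ge> 0" for k using attained xsD[of k] by (auto simp: \<delta>_def)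
  have dec: "2 * c * (\<delta> (Suc k))\<^sup>2 \<le> \<delta> k - \<delta> (Suc k)" for k
  proof -
    define n where "n = norm (xs k - xs (Suc k))"
    have S: "\<delta> (Suc k) \<le> \<delta> k - L / 2 * n\<^sup>2"
      using suff_decrease[OF Psi grad Lpos Lip xsD[of k]]
      by (simp add: \<delta>_def n_def xsS T_def)
    have "sqrt (2 * \<omega>) * \<delta> (Suc k) \<le> norm (G_map L D \<Psi> gradf (xs k))"
      using dominance[OF xsD[of k]] by (simp add: \<delta>_def xsS T_def)
    also have "norm (G_map L D \<Psi> gradf (xs k)) = L * n"
      using Lpos by (simp add: G_map_def n_def xsS T_def)
    finally have dom: "sqrt (2 * \<omega>) * \<delta> (Suc k) \<le> L * n" .
    have "(sqrt (2 * \<omega>) * \<delta> (Suc k))\<^sup>2 \<le> (L * n)\<^sup>2"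
      using dom d0[of "Suc k"] omega by (intro power_mono) auto
    then have P1: "2 * \<omega> * (\<delta> (Suc k))\<^sup>2 \<le> L\<^sup>2 * n\<^sup>2"
      using omega by (simp add: power_mult_distrib)
    have "2 * \<omega> * (\<delta> (Suc k))\<^sup>2 / (2 * L) \<le> L\<^sup>2 * n\<^sup>2 / (2 * L)"
      by (rule divide_right_mono[OF P1]) (use Lpos in simp)
    moreover have "2 * \<omega> * (\<delta> (Suc k))\<^sup>2 / (2 * L) = 2 * c * (\<delta> (Suc k))\<^sup>2"
      by (simp add: c_def)
    moreover have "L\<^sup>2 * n\<^sup>2 / (2 * L) = L / 2 * n\<^sup>2"
      using Lpos by (simp add: power2_eq_square)
    ultimately show ?thesis using S by linarith
  qed
  have inv: "\<exists>a b. a + b = k \<and> \<delta> k \<le> (1/2)^b * \<delta> 0 \<and> real a * c * \<delta> k \<le> 1" for k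
  proof (induction k)
    case 0 then show ?case by (intro exI[of _ 0]) simp
  next
    case (Suc k)
    then obtain a b where ab: "a + b = k" "\<delta> k \<le> (1/2)^b * \<delta> 0" "real a * c * \<delta> k \<le> 1" by blast
    from rate_step[OF c0 d0[of "Suc k"] dec[of k] ab(2) ab(3)] show ?case using ab(1) by simp
  qed
  show ?thesis
  proof (intro allI impI)
    fix k :: nat assume k: "k > 0"
    obtain a b where ab: "a + b = k" "\<delta> k \<le> (1/2)^b * \<delta> 0" "real a * c * \<delta> k \<le> 1"
      using inv by blast
    have "\<delta> k \<le> max (4 * L / (\<omega> * real k)) ((sqrt 2 / 2) ^ k * \<delta> 0)"
    proof (cases "k \<le> 2 * a")
      case True
      have "\<delta> k * (\<omega> * real k) \<le> \<delta> k * (\<omega> * (2 * real a))"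
        using True d0[of k] omega by (intro mult_left_mono) auto
      also have "\<dots> = 4 * L * (real a * c * \<delta> k)"
        using Lpos by (simp add: c_def field_simps)
      also have "\<dots> \<le> 4 * L" using ab(3) Lpos by simp
      finally have "\<delta> k \<le> 4 * L / (\<omega> * real k)"
        using k omega by (simp add: pos_le_divide_eq)
      then show ?thesis by simp
    next
      case False
      then have kb: "k \<le> 2 * b" using ab(1) by simp
      have h: "(sqrt 2 / 2) ^ 2 = 1 / 2" by (simp add: power_divide)
      have "sqrt (2::real) \<le> sqrt (2\<^sup>2)" by (rule real_sqrt_le_mono) simp
      then have s2: "sqrt (2::real) \<le> 2" by simp
      have "(1/2 :: real) ^ b = (sqrt 2 / 2) ^ (2 * b)" by (simp add: power_mult h)
      also have "\<dots> \<le> (sqrt 2 / 2) ^ k"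
        by (rule power_decreasing[OF kb]) (use s2 in auto)
      finally have "(1/2)^b * \<delta> 0 \<le> (sqrt 2 / 2) ^ k * \<delta> 0"
        using d0[of 0] by (simp add: mult_right_mono)
      then show ?thesis using ab(2) by simp
    qed
    then show "f ((T_map L D \<Psi> gradf ^^ k) x0) + \<Psi> ((T_map L D \<Psi> gradf ^^ k) x0) - Fstar
       \<le> max (4 * L / (\<omega> * real k)) ((sqrt 2 / 2) ^ k * (f x0 + \<Psi> x0 - Fstar))"
      by (simp add: \<delta>_def xs_def T_def)
  qed
qed

end
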